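(* Let $n\ge2$. Then: (i) for all $I,J\subseteq[1,n-1]$: $a_I+a_J\in A_n$ if and only if $I\cap J=\emptyset$; (ii) for every $I\subseteq[1,n-1]$ and every $J$ that is either a subset of $[1,n-1]$ or of the form $Z\cup\{n+1\}$ with $Z\subseteq[1,n-1]$: $a_I+a_J\in B_n$ if and only if $I\cap J=\emptyset$; moreover, for $I\subseteq[1,n-1]$, $a_{[1,n]}+a_I\in B_n$ if and only if $I=\emptyset$; (iii) for all $I,J\subseteq[1,n+1]$: $a_I+a_J\in C_n$ if and only if either $I\cap J=\emptyset$, or $I\cup J=[1,n]$ and $n\in I\cap J$.
   Context: $[x,y]=\{z\in\mathbb Z:x\le z\le y\}$. Fix an integer $n\ge2$ and positive integers $a_1,\dots,a_{n+1}$ with (C1) $a_{n+1}=a_1+\dots+a_{n-1}+2a_n$ and (C2) $a_{i+1}>2(a_1+\dots+a_i)$ for all $i\in[1,n-1]$. For $I\subseteq[1,n+1]$ put $a_I=\sum_{i\in I}a_i$ ($a_\emptyset=0$). Define $A_n=\{a_I:I\subseteq[1,n-1]\}$, $B_n=A_n\cup\{a_{[1,n]}\}\cup(A_n+a_{n+1})$, $C_n=\{a_I:I\subseteq[1,n+1]\}$. *)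

theory Defs
  imports Main
begin

text \<open>The sequence a_1,...,a_{n+1} is modelled as a function a :: nat => int,
only the values at indices 1..n+1 matter.\<close>

definition aS :: "(nat \<Rightarrow> int) \<Rightarrow> nat set \<Rightarrow> int" where
  "aS a I = (\<Sum>i\<in>I. a i)"

definition An :: "(nat \<Rightarrow> int) \<Rightarrow> nat \<Rightarrow> int set" where
  "An a n = {aS a I | I. I \<subseteq> {1..n-1}}"

definition Bn :: "(nat \<Rightarrow> int) \<Rightarrow> nat \<Rightarrow> int set" where
  "Bn a n = An a n \<union> {aS a {1..n}} \<union> (\<lambda>x. x + a (n+1)) ` An a n"

definition Cn :: "(nat \<Rightarrow> int) \<Rightarrow> nat \<Rightarrow> int set" where
  "Cn a n = {aS a I | I. I \<subseteq> {1..n+1}}"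

end

theory Submission
  imports Defs
begin

definition chi :: "nat set \<Rightarrow> nat \<Rightarrow> int" where
  "chi I i = (if i \<in> I then 1 else 0)"

lemma aS_chi: "finite A \<Longrightarrow> I \<subseteq> A \<Longrightarrow> aS a I = (\<Sum>i\<in>A. chi I i * a i)"
proof -
  assume f: "finite A" and s: "I \<subseteq> A"
  have "aS a I = (\<Sum>x\<in>A. if x \<in> I then a x else 0)"
    unfolding aS_def using sum.inter_restrict[of A a I] f s by (simp add: Int_absorb1)
  also have "\<dots> = (\<Sum>i\<in>A. chi I i * a i)" by (rule sum.cong) (auto simp: chi_def)
  finally show ?thesis .
qed

lemma uniq:
  fixes a c d :: "nat \<Rightarrow> int"
  assumes "\<forall>i\<in>{1..m}. 0 < a i \<and> 2*(\<Sum>j\<in>{1..<i}. a j) < a i"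
    and "\<forall>i\<in>{1..m}. 0\<le>c i \<and> c i\<le>2 \<and> 0\<le>d i \<and> d i\<le>2"
    and "(\<Sum>i\<in>{1..m}. c i * a i) = (\<Sum>i\<in>{1..m}. d i * a i)"
  shows "\<forall>i\<in>{1..m}. c i = d i"
  using assms
proof (induction m)
  case 0 show ?case by simp
next
  case (Suc m)
  have A: "\<forall>i\<in>{1..m}. 0 < a i \<and> 2*(\<Sum>j\<in>{1..<i}. a j) < a i"
    "\<forall>i\<in>{1..m}. 0\<le>c i \<and> c i\<le>2 \<and> 0\<le>d i \<and> d i\<le>2" using Suc.prems by auto
  have top0: "0 < a (Suc m) \<and> 2*(\<Sum>j\<in>{1..<Suc m}. a j) < a (Suc m)"
    by (rule bspec[OF Suc.prems(1)]) simp
  have ee: "{1..<Suc m} = {1..m}" by (rule atLeastLessThanSuc_atLeastAtMost)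
  have top: "0 < a (Suc m)" "2*(\<Sum>j\<in>{1..m}. a j) < a (Suc m)"
    using top0 unfolding ee by auto
  have tc: "0\<le>c (Suc m)" "c (Suc m)\<le>2" "0\<le>d (Suc m)" "d (Suc m)\<le>2" using Suc.prems(2) by auto
  have eq: "(\<Sum>i\<in>{1..m}. c i * a i) + c (Suc m) * a (Suc m) = (\<Sum>i\<in>{1..m}. d i * a i) + d (Suc m) * a (Suc m)"
    using Suc.prems(3) by simp
  have bnd: "0 \<le> (\<Sum>i\<in>{1..m}. e i * a i) \<and> (\<Sum>i\<in>{1..m}. e i * a i) \<le> 2*(\<Sum>j\<in>{1..m}. a j)"
    if "\<forall>i\<in>{1..m}. 0 \<le> e i \<and> e i \<le> 2" for e
  proof
    show "0 \<le> (\<Sum>i\<in>{1..m}. e i * a i)" 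
    proof (intro sum_nonneg)
      fix x assume "x \<in> {1..m}"
      then have "0 \<le> e x" "0 < a x" using that A(1) by auto
      then show "0 \<le> e x * a x" by simp
    qed
    have "(\<Sum>i\<in>{1..m}. e i * a i) \<le> (\<Sum>i\<in>{1..m}. 2 * a i)"
      
    proof (intro sum_mono)
      fix x assume "x \<in> {1..m}"
      then have "e x \<le> 2" "0 < a x" using that A(1) by auto
      then show "e x * a x \<le> 2 * a x" by (intro mult_right_mono) auto
    qed
    then show "(\<Sum>i\<in>{1..m}. e i * a i) \<le> 2*(\<Sum>j\<in>{1..m}. a j)" by (simp add: sum_distrib_left)
  qed
  have bc: "0 \<le> (\<Sum>i\<in>{1..m}. c i * a i) \<and> (\<Sum>i\<in>{1..m}. c i * a i) \<le> 2*(\<Sum>j\<in>{1..m}. a j)"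
    using bnd A(2) by auto
  have bd: "0 \<le> (\<Sum>i\<in>{1..m}. d i * a i) \<and> (\<Sum>i\<in>{1..m}. d i * a i) \<le> 2*(\<Sum>j\<in>{1..m}. a j)"
    using bnd A(2) by auto
  have ceq: "c (Suc m) = d (Suc m)"
  proof (rule ccontr)
    assume "c (Suc m) \<noteq> d (Suc m)"
    then consider "c (Suc m) - d (Suc m) \<ge> 1" | "d (Suc m) - c (Suc m) \<ge> 1" by linarith
    then show False
    proof cases
      case 1
      then have "(c (Suc m) - d (Suc m)) * a (Suc m) \<ge> 1 * a (Suc m)" using top by (intro mult_right_mono) auto
      then have "c (Suc m) * a (Suc m) - d (Suc m) * a (Suc m) \<ge> a (Suc m)" by (simp add: left_diff_distrib)
      then show False using eq bc bd top by linarith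
    next
      case 2
      then have "(d (Suc m) - c (Suc m)) * a (Suc m) \<ge> 1 * a (Suc m)" using top by (intro mult_right_mono) auto
      then have "d (Suc m) * a (Suc m) - c (Suc m) * a (Suc m) \<ge> a (Suc m)" by (simp add: left_diff_distrib)
      then show False using eq bc bd top by linarith
    qed
  qed
  have "\<forall>i\<in>{1..m}. c i = d i" using Suc.IH A eq ceq by simp
  then show ?case using ceq by (auto simp: le_Suc_eq)
qed

theorem lemma3p8:
  fixes a :: "nat \<Rightarrow> int" and n :: nat
  assumes hn: "n \<ge> 2"
    and hpos: "\<forall>i\<in>{1..n+1}. a i > 0"
    and C1: "a (n+1) = (\<Sum>i\<in>{1..n-1}. a i) + 2 * a n"
    and C2: "\<forall>i\<in>{1..n-1}. a (i+1) > 2 * (\<Sum>j\<in>{1..i}. a j)"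
  shows "(\<forall>I J. I \<subseteq> {1..n-1} \<longrightarrow> J \<subseteq> {1..n-1} \<longrightarrow>
            (aS a I + aS a J \<in> An a n \<longleftrightarrow> I \<inter> J = {}))
       \<and> (\<forall>I J. I \<subseteq> {1..n-1} \<longrightarrow>
            (J \<subseteq> {1..n-1} \<or> (\<exists>Z. Z \<subseteq> {1..n-1} \<and> J = Z \<union> {n+1})) \<longrightarrow>
            (aS a I + aS a J \<in> Bn a n \<longleftrightarrow> I \<inter> J = {}))
       \<and> (\<forall>I. I \<subseteq> {1..n-1} \<longrightarrow>
            (aS a {1..n} + aS a I \<in> Bn a n \<longleftrightarrow> I = {}))
       \<and> (\<forall>I J. I \<subseteq> {1..n+1} \<longrightarrow> J \<subseteq> {1..n+1} \<longrightarrow>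
            (aS a I + aS a J \<in> Cn a n \<longleftrightarrow>
               I \<inter> J = {} \<or> (I \<union> J = {1..n} \<and> n \<in> I \<inter> J)))"
proof -
  obtain m where nm: "n = Suc m" and m1: "1 \<le> m" using hn by (cases n) auto
  have nm1: "n - 1 = m" using nm by simp
  define s where "s = (\<Sum>i\<in>{1..m}. a i)"
  have sub1: "{1..n-1} \<subseteq> {1..n}" by auto
  have sub2: "{1..n} \<subseteq> {1..n+1}" by auto
  have in1: "\<And>K. K \<subseteq> {1..n-1} \<Longrightarrow> K \<subseteq> {1..n+1}" using sub1 sub2 by blast
  have in1n: "\<And>K. K \<subseteq> {1..n-1} \<Longrightarrow> K \<subseteq> {1..n}" using sub1 by blast
  have fin: "\<And>K. K \<subseteq> {1..n+1} \<Longrightarrow> finite K" using finite_subset by blast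
  have SI: "\<forall>i\<in>{1..n}. 0 < a i \<and> 2*(\<Sum>j\<in>{1..<i}. a j) < a i"
  proof
    fix i assume i: "i \<in> {1..n}"
    show "0 < a i \<and> 2*(\<Sum>j\<in>{1..<i}. a j) < a i"
    proof (cases "i = 1")
      case True then show ?thesis using hpos by simp
    next
      case False
      then obtain k where k: "i = Suc k" "k \<in> {1..n-1}" using i by (cases i) auto
      then have "2*(\<Sum>j\<in>{1..k}. a j) < a (k+1)" using C2 by auto
      moreover have "{1..<i} = {1..k}" using k(1) by auto
      ultimately show ?thesis using hpos i k(1) by auto
    qed
  qed
  have SI': "\<forall>i\<in>{1..m}. 0 < a i \<and> 2*(\<Sum>j\<in>{1..<i}. a j) < a i" using SI nm by auto
  have U: "\<And>c d. \<forall>i\<in>{1..n}. 0\<le>c i \<and> c i\<le>2 \<and> 0\<le>d i \<and> d i\<le>2 \<Longrightarrow>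
     (\<Sum>i\<in>{1..n}. c i * a i) = (\<Sum>i\<in>{1..n}. d i * a i) \<Longrightarrow> \<forall>i\<in>{1..n}. c i = d i"
    using uniq[OF SI] by blast
  have U': "\<And>c d. \<forall>i\<in>{1..m}. 0\<le>c i \<and> c i\<le>2 \<and> 0\<le>d i \<and> d i\<le>2 \<Longrightarrow>
     (\<Sum>i\<in>{1..m}. c i * a i) = (\<Sum>i\<in>{1..m}. d i * a i) \<Longrightarrow> \<forall>i\<in>{1..m}. c i = d i"
    using uniq[OF SI'] by blast
  have D: "I \<inter> J = {}" if I: "I \<subseteq> {1..n}" and J: "J \<subseteq> {1..n}" and K: "K \<subseteq> {1..n}"
    and eq: "aS a I + aS a J = aS a K" for I J K
  proof -
    have "(\<Sum>i\<in>{1..n}. (chi I i + chi J i) * a i) = (\<Sum>i\<in>{1..n}. chi K i * a i)"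
      using aS_chi[of "{1..n}" I a] aS_chi[of "{1..n}" J a] aS_chi[of "{1..n}" K a] I J K eq
      by (simp add: distrib_right sum.distrib)
    then have h: "\<forall>i\<in>{1..n}. chi I i + chi J i = chi K i" by (intro U) (auto simp: chi_def)
    show ?thesis
    proof (rule ccontr)
      assume "I \<inter> J \<noteq> {}"
      then obtain x where x: "x \<in> I" "x \<in> J" by blast
      then have "x \<in> {1..n}" using I by auto
      then have "chi I x + chi J x = chi K x" using h by blast
      then show False using x by (auto simp: chi_def split: if_splits)
    qed
  qed
  have aSun: "aS a (I \<union> J) = aS a I + aS a J" if "finite I" "finite J" "I \<inter> J = {}" for I J
    using that by (simp add: aS_def sum.union_disjoint)
  have aSui: "aS a I + aS a J = aS a (I \<union> J) + aS a (I \<inter> J)" if "finite I" "finite J" for I J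
    using that by (simp add: aS_def sum.union_inter)
  have aSins: "aS a (insert x Z) = a x + aS a Z" if "x \<notin> Z" "finite Z" for x Z
    using that by (simp add: aS_def)
  have aSnn: "0 \<le> aS a K" if "K \<subseteq> {1..n+1}" for K
    unfolding aS_def using that hpos by (intro sum_nonneg) (auto simp: less_imp_le)
  have aSmono: "aS a K \<le> aS a L" if "K \<subseteq> L" "L \<subseteq> {1..n+1}" for K L
    unfolding aS_def using that hpos fin[of L]
    by (intro sum_mono2) (auto simp: less_imp_le)
  have aSpos: "0 < aS a K" if "K \<subseteq> {1..n+1}" "K \<noteq> {}" for K
    unfolding aS_def using that hpos fin[of K] by (intro sum_pos) auto
  have ss: "aS a {1..n-1} = s" unfolding aS_def s_def nm1 ..
  have s_lt: "2*s < a n"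
  proof -
    have e: "{1..<n} = {1..m}" using nm by auto
    have "0 < a n \<and> 2*(\<Sum>j\<in>{1..<n}. a j) < a n" by (rule bspec[OF SI]) (use hn in auto)
    then show ?thesis unfolding e s_def by auto
  qed
  have s0: "0 \<le> s" using aSnn[OF order.trans[OF sub1 sub2]] ss by simp
  have an0: "0 < a n" "0 < a (n+1)" using hpos hn by auto
  have an1: "a (n+1) = s + 2*a n" using C1 s_def nm1 by simp
  have aSn: "aS a {1..n} = s + a n" unfolding aS_def s_def nm by simp
  have bnd1: "aS a K \<le> s" if "K \<subseteq> {1..n-1}" for K
    using aSmono[OF that order.trans[OF sub1 sub2]] ss by simp
  have bndn: "aS a K \<le> s + a n" if "K \<subseteq> {1..n}" for K
    using aSmono[of K "{1..n}"] that aSn by auto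
  have bndn1: "aS a K \<le> s + a n + a (n+1)" if "K \<subseteq> {1..n+1}" for K
  proof -
    have "aS a {1..n+1} = aS a {1..n} + a (n+1)" unfolding aS_def by simp
    then show ?thesis using aSmono[of K "{1..n+1}"] that aSn by auto
  qed
  have P1: "\<forall>I J. I \<subseteq> {1..n-1} \<longrightarrow> J \<subseteq> {1..n-1} \<longrightarrow>
            (aS a I + aS a J \<in> An a n \<longleftrightarrow> I \<inter> J = {})"
  proof (intro allI impI)
    fix I J assume I: "I \<subseteq> {1..n-1}" and J: "J \<subseteq> {1..n-1}"
    show "aS a I + aS a J \<in> An a n \<longleftrightarrow> I \<inter> J = {}"
    proof
      assume "aS a I + aS a J \<in> An a n"
      then obtain K where K: "K \<subseteq> {1..n-1}" "aS a I + aS a J = aS a K" unfolding An_def by auto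
      then show "I \<inter> J = {}" using D[OF in1n[OF I] in1n[OF J] in1n[OF K(1)] K(2)] by blast
    next
      assume "I \<inter> J = {}"
      then have "aS a I + aS a J = aS a (I \<union> J)" using aSun fin I J sub1 sub2
        by (metis finite_Un finite_atLeastAtMost finite_subset)
      moreover have "I \<union> J \<subseteq> {1..n-1}" using I J by auto
      ultimately show "aS a I + aS a J \<in> An a n" unfolding An_def by blast
    qed
  qed
  have P2: "\<forall>I J. I \<subseteq> {1..n-1} \<longrightarrow>
            (J \<subseteq> {1..n-1} \<or> (\<exists>Z. Z \<subseteq> {1..n-1} \<and> J = Z \<union> {n+1})) \<longrightarrow>
            (aS a I + aS a J \<in> Bn a n \<longleftrightarrow> I \<inter> J = {})"
  proof (intro allI impI)
    fix I J assume I: "I \<subseteq> {1..n-1}" and hJ: "J \<subseteq> {1..n-1} \<or> (\<exists>Z. Z \<subseteq> {1..n-1} \<and> J = Z \<union> {n+1})"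
    have aI: "0 \<le> aS a I" "aS a I \<le> s" using aSnn[OF in1[OF I]] bnd1[OF I] by auto
    from hJ show "aS a I + aS a J \<in> Bn a n \<longleftrightarrow> I \<inter> J = {}"
    proof
      assume J: "J \<subseteq> {1..n-1}"
      have aJ: "0 \<le> aS a J" "aS a J \<le> s" using aSnn[OF in1[OF J]] bnd1[OF J] by auto
      show ?thesis
      proof
        assume "aS a I + aS a J \<in> Bn a n"
        then consider "aS a I + aS a J \<in> An a n" | "aS a I + aS a J = aS a {1..n}"
          | y where "y \<in> An a n" "aS a I + aS a J = y + a (n+1)" unfolding Bn_def by auto
        then show "I \<inter> J = {}"
        proof cases
          case 1 then show ?thesis using P1[rule_format, OF I J] by simp
        next
          case 2 then have False using aSn aI aJ s_lt an0 by linarith then show ?thesis by blast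
        next
          case 3
          then obtain K where K: "K \<subseteq> {1..n-1}" "y = aS a K" unfolding An_def by auto
          then have "0 \<le> y" using aSnn[OF in1[OF K(1)]] by auto
          then have False using 3 aI aJ an1 an0 s_lt s0 by linarith then show ?thesis by blast
        qed
      next
        assume "I \<inter> J = {}"
        then have "aS a I + aS a J \<in> An a n" using P1[rule_format, OF I J] by simp
        then show "aS a I + aS a J \<in> Bn a n" unfolding Bn_def by blast
      qed
    next
      assume "\<exists>Z. Z \<subseteq> {1..n-1} \<and> J = Z \<union> {n+1}"
      then obtain Z where Z: "Z \<subseteq> {1..n-1}" and JZ: "J = Z \<union> {n+1}" by blast
      have nZ: "n+1 \<notin> Z" using Z by auto
      have finZ: "finite Z" using Z finite_subset by blast
      have aJ: "aS a J = a (n+1) + aS a Z" using aSins[OF nZ finZ] JZ by simp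
      have IJ: "I \<inter> J = I \<inter> Z" using I JZ by auto
      have aZ: "0 \<le> aS a Z" "aS a Z \<le> s" using aSnn[OF in1[OF Z]] bnd1[OF Z] by auto
      show ?thesis
      proof
        assume "aS a I + aS a J \<in> Bn a n"
        then consider "aS a I + aS a J \<in> An a n" | "aS a I + aS a J = aS a {1..n}"
          | y where "y \<in> An a n" "aS a I + aS a J = y + a (n+1)" unfolding Bn_def by auto
        then show "I \<inter> J = {}"
        proof cases
          case 1
          then obtain K where K: "K \<subseteq> {1..n-1}" "aS a I + aS a J = aS a K" unfolding An_def by auto
          then have False using bnd1[OF K(1)] K(2) aJ aI aZ an1 an0 s0 by linarith then show ?thesis by blast
        next
          case 2 then have False using aSn aI aJ aZ an1 an0 s0 by linarith then show ?thesis by blast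
        next
          case 3
          then obtain K where K: "K \<subseteq> {1..n-1}" "y = aS a K" unfolding An_def by auto
          then have "aS a I + aS a Z = aS a K" using 3 aJ by simp
          then show ?thesis using D[OF in1n[OF I] in1n[OF Z] in1n[OF K(1)]] IJ by blast
        qed
      next
        assume "I \<inter> J = {}"
        then have "aS a I + aS a Z \<in> An a n" using P1[rule_format, OF I Z] IJ by simp
        moreover have "aS a I + aS a J = (aS a I + aS a Z) + a (n+1)" using aJ by simp
        ultimately show "aS a I + aS a J \<in> Bn a n" unfolding Bn_def by blast
      qed
    qed
  qed
  have P3: "\<forall>I. I \<subseteq> {1..n-1} \<longrightarrow> (aS a {1..n} + aS a I \<in> Bn a n \<longleftrightarrow> I = {})"
  proof (intro allI impI)
    fix I assume I: "I \<subseteq> {1..n-1}"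
    show "aS a {1..n} + aS a I \<in> Bn a n \<longleftrightarrow> I = {}"
    proof
      assume B: "aS a {1..n} + aS a I \<in> Bn a n"
      show "I = {}"
      proof (rule ccontr)
        assume ne: "I \<noteq> {}"
        have aI: "0 < aS a I" "aS a I \<le> s" using aSpos[OF in1[OF I] ne] bnd1[OF I] by auto
        from B consider "aS a {1..n} + aS a I \<in> An a n" | "aS a {1..n} + aS a I = aS a {1..n}"
          | y where "y \<in> An a n" "aS a {1..n} + aS a I = y + a (n+1)" unfolding Bn_def by auto
        then show False
        proof cases
          case 1
          then obtain K where K: "K \<subseteq> {1..n-1}" "aS a {1..n} + aS a I = aS a K" unfolding An_def by auto
          then have False using bnd1[OF K(1)] K(2) aSn aI an0 by linarith then show ?thesis by blast
        next
          case 2 then have False using aI by linarith then show ?thesis by blast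
        next
          case 3
          then obtain K where K: "K \<subseteq> {1..n-1}" "y = aS a K" unfolding An_def by auto
          then have "0 \<le> y" using aSnn[OF in1[OF K(1)]] by auto
          then have False using 3 aSn aI an1 s_lt s0 by linarith then show ?thesis by blast
        qed
      qed
    next
      assume "I = {}"
      then show "aS a {1..n} + aS a I \<in> Bn a n" unfolding Bn_def by (simp add: aS_def)
    qed
  qed
  have P4: "\<forall>I J. I \<subseteq> {1..n+1} \<longrightarrow> J \<subseteq> {1..n+1} \<longrightarrow>
            (aS a I + aS a J \<in> Cn a n \<longleftrightarrow>
               I \<inter> J = {} \<or> (I \<union> J = {1..n} \<and> n \<in> I \<inter> J))"
  proof (intro allI impI)
    fix I J assume I: "I \<subseteq> {1..n+1}" and J: "J \<subseteq> {1..n+1}"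
    have fI: "finite I" "finite J" using fin I J by auto
    have rem: "aS a X = a x + aS a (X - {x})" if "finite X" "x \<in> X" for X x
      unfolding aS_def using that by (rule sum.remove)
    have spl: "aS a X = (if n+1 \<in> X then a (n+1) else 0) + aS a (X - {n+1})" if "X \<subseteq> {1..n+1}" for X
    proof (cases "n+1 \<in> X")
      case True then show ?thesis using rem[OF fin[OF that] True] by simp
    next
      case False then have "X - {n+1} = X" by auto
      then show ?thesis using False by simp
    qed
    have sub': "X - {n+1} \<subseteq> {1..n}" if "X \<subseteq> {1..n+1}" for X using that by auto
    have subm: "X \<subseteq> {1..m}" if "X \<subseteq> {1..n}" "n \<notin> X" for X
    proof
      fix x assume "x \<in> X" then have "x \<in> {1..n}" "x \<noteq> n" using that by auto
      then show "x \<in> {1..m}" using nm by auto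
    qed
    have bndm: "aS a X \<le> s" if "X \<subseteq> {1..m}" for X using bnd1[unfolded nm1] that by blast
    have nnn: "0 \<le> aS a X" if "X \<subseteq> {1..n}" for X using aSnn that sub2 by blast
    show "aS a I + aS a J \<in> Cn a n \<longleftrightarrow> (I \<inter> J = {} \<or> (I \<union> J = {1..n} \<and> n \<in> I \<inter> J))"
    proof
      assume "aS a I + aS a J \<in> Cn a n"
      then obtain K where K: "K \<subseteq> {1..n+1}" "aS a I + aS a J = aS a K" unfolding Cn_def by auto
      show "I \<inter> J = {} \<or> (I \<union> J = {1..n} \<and> n \<in> I \<inter> J)"
      proof (rule disj_commute[THEN iffD1], rule disjCI)
        assume ne: "I \<inter> J \<noteq> {}"
        define I' where "I' = I - {n+1}"
        define J' where "J' = J - {n+1}"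
        define K' where "K' = K - {n+1}"
        have I': "I' \<subseteq> {1..n}" using sub'[OF I] I'_def by simp
        have J': "J' \<subseteq> {1..n}" using sub'[OF J] J'_def by simp
        have K': "K' \<subseteq> {1..n}" using sub'[OF K(1)] K'_def by simp
        have sI: "aS a I = (if n+1 \<in> I then a (n+1) else 0) + aS a I'" using spl[OF I] I'_def by simp
        have sJ: "aS a J = (if n+1 \<in> J then a (n+1) else 0) + aS a J'" using spl[OF J] J'_def by simp
        have sK: "aS a K = (if n+1 \<in> K then a (n+1) else 0) + aS a K'" using spl[OF K(1)] K'_def by simp
        have bI: "0 \<le> aS a I'" "aS a I' \<le> s + a n" using nnn[OF I'] bndn[OF I'] by auto
        have bJ: "0 \<le> aS a J'" "aS a J' \<le> s + a n" using nnn[OF J'] bndn[OF J'] by auto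
        have bK: "0 \<le> aS a K'" "aS a K' \<le> s + a n" using nnn[OF K'] bndn[OF K'] by auto
        show "I \<union> J = {1..n} \<and> n \<in> I \<inter> J"
        proof (cases "n+1 \<in> I \<and> n+1 \<in> J")
          case True
          then have False using sI sJ sK K(2) bI bJ bK an1 an0 s0 by (auto split: if_splits)
          then show ?thesis by blast
        next
          case False
          show ?thesis
          proof (cases "n+1 \<in> I \<or> n+1 \<in> J")
            case True
            show ?thesis
            proof (cases "n+1 \<in> K")
              case True
              then have "aS a I' + aS a J' = aS a K'" using sI sJ sK K(2) \<open>n+1 \<in> I \<or> n+1 \<in> J\<close> False
                by (auto split: if_splits)
              then have "I' \<inter> J' = {}" using D[OF I' J' K'] by blast
              then have "I \<inter> J = {}" using False I'_def J'_def by auto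
              then show ?thesis using ne by blast
            next
              case nK: False
              then have False using sI sJ sK K(2) bI bJ bK an1 an0 s0 \<open>n+1 \<in> I \<or> n+1 \<in> J\<close>
                by (auto split: if_splits)
              then show ?thesis by blast
            qed
          next
            case nIJ: False
            then have II: "I' = I" "J' = J" using I'_def J'_def by auto
            show ?thesis
            proof (cases "n+1 \<in> K")
              case False
              then have "aS a I' + aS a J' = aS a K'" using sI sJ sK K(2) nIJ by simp
              then have "I' \<inter> J' = {}" using D[OF I' J' K'] by blast
              then show ?thesis using ne II by blast
            next
              case True
              then have eq: "aS a I' + aS a J' = a (n+1) + aS a K'" using sI sJ sK K(2) nIJ by simp
              have nI: "n \<in> I'"
              proof (rule ccontr)
                assume "n \<notin> I'"
                then have "aS a I' \<le> s" using bndm subm I' by blast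
                then show False using eq bJ bK an1 s_lt s0 by linarith
              qed
              have nJ: "n \<in> J'"
              proof (rule ccontr)
                assume "n \<notin> J'"
                then have "aS a J' \<le> s" using bndm subm J' by blast
                then show False using eq bI bK an1 s_lt s0 by linarith
              qed
              have nK: "n \<notin> K'"
              proof
                assume nK: "n \<in> K'"
                have "aS a K' = a n + aS a (K' - {n})" using rem[OF fin[OF order.trans[OF K' sub2]] nK] .
                moreover have "0 \<le> aS a (K' - {n})" using nnn K' by (meson Diff_subset order.trans)
                ultimately show False using eq bI bJ an1 s_lt s0 by linarith
              qed
              define I0 where "I0 = I' - {n}"
              define J0 where "J0 = J' - {n}"
              have I0: "I0 \<subseteq> {1..m}" using subm[of I0] I' I0_def by auto
              have J0: "J0 \<subseteq> {1..m}" using subm[of J0] J' J0_def by auto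
              have K0: "K' \<subseteq> {1..m}" using subm K' nK by blast
              have "aS a I' = a n + aS a I0" unfolding I0_def
                using rem[OF fin[OF order.trans[OF I' sub2]] nI] .
              moreover have "aS a J' = a n + aS a J0" unfolding J0_def
                using rem[OF fin[OF order.trans[OF J' sub2]] nJ] .
              ultimately have eq0: "aS a I0 + aS a J0 = s + aS a K'" using eq an1 by linarith
              have "(\<Sum>i\<in>{1..m}. (chi I0 i + chi J0 i) * a i) = (\<Sum>i\<in>{1..m}. (1 + chi K' i) * a i)"
                using aS_chi[of "{1..m}" I0 a] aS_chi[of "{1..m}" J0 a] aS_chi[of "{1..m}" K' a] I0 J0 K0 eq0
                by (simp add: distrib_right sum.distrib s_def)
              then have h: "\<forall>i\<in>{1..m}. chi I0 i + chi J0 i = 1 + chi K' i"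
                by (intro U') (auto simp: chi_def)
              have cov: "{1..m} \<subseteq> I0 \<union> J0"
              proof
                fix i assume i: "i \<in> {1..m}"
                then have "chi I0 i + chi J0 i = 1 + chi K' i" using h by blast
                then show "i \<in> I0 \<union> J0" by (auto simp: chi_def split: if_splits)
              qed
              have "{1..n} = insert n {1..m}" using nm by auto
              then have "I \<union> J = {1..n}" using cov I' J' II I0_def J0_def nI nJ by auto
              then show ?thesis using nI nJ II by auto
            qed
          qed
        qed
      qed
    next
      assume H: "I \<inter> J = {} \<or> (I \<union> J = {1..n} \<and> n \<in> I \<inter> J)"
      show "aS a I + aS a J \<in> Cn a n"
      proof (cases "I \<inter> J = {}")
        case True
        then have "aS a I + aS a J = aS a (I \<union> J)" using aSun fI by simp
        moreover have "I \<union> J \<subseteq> {1..n+1}" using I J by auto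
        ultimately show ?thesis unfolding Cn_def by blast
      next
        case False
        then have U2: "I \<union> J = {1..n}" and nIJ: "n \<in> I \<inter> J" using H by auto
        define L where "L = I \<inter> J - {n}"
        have L: "L \<subseteq> {1..m}"
        proof
          fix x assume "x \<in> L"
          then have "x \<in> I \<union> J" "x \<noteq> n" using L_def by auto
          then have "x \<in> {1..n}" "x \<noteq> n" using U2 by auto
          then show "x \<in> {1..m}" using nm by auto
        qed
        have nL: "n+1 \<notin> L" using L nm by auto
        have fL: "finite L" using L finite_subset by blast
        have "aS a (I \<inter> J) = a n + aS a L" unfolding L_def
          using rem[of "I \<inter> J" n] fI nIJ by simp
        then have "aS a I + aS a J = s + a n + a n + aS a L" using aSui[OF fI] U2 aSn by simp
        also have "\<dots> = aS a (insert (n+1) L)" using aSins[OF nL fL] an1 by simp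
        finally have "aS a I + aS a J = aS a (insert (n+1) L)" .
        moreover have "insert (n+1) L \<subseteq> {1..n+1}" using L nm by auto
        ultimately show ?thesis unfolding Cn_def by blast
      qed
    qed
  qed
  show ?thesis using P1 P2 P3 P4 by blast
qed

end
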